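(* For any instance $\mathcal{I}$ of the online volunteer notification problem, $\mathbf{LP}_{\mathcal{I}}$ is at least the expected number of tasks completed by the clairvoyant solution.
   Context: Online volunteer notification problem. An instance $\mathcal{I}$ consists of volunteers $[V]$, task types $[S]$, horizon $T$, arrival probabilities $\lambda_{s,t}\ge0$ with $\sum_{s=1}^S\lambda_{s,t}\le1$, match probabilities $p_{v,s}\in[0,1]$, and a probability mass function $g$ on the positive integers with CDF $G(\tau)=\sum_{i\le\tau}g(i)$, $G(0)=0$. In each period $t$ at most one task arrives, of type $s$ with probability $\lambda_{s,t}$, independently across periods. All volunteers start active. Upon an arrival, a subset of volunteers is notified; each notified active volunteer $v$ responds positively independently with probability $p_{v,s}$, and the task is completed iff at least one does. A volunteer active and notified at time $t$ becomes inactive (regardless of response) and becomes active again at time $t+Z$, where $Z\sim g$ is independent; inactive volunteers ignore notifications and are unaffected by them. Clairvoyant solution: the best (maximum expected number of completed tasks) notification strategy that knows the entire sequence of arrivals in advance and the state (active/inactive) of every volunteer in every period, but does not know the realized inactivity length $Z$ of a volunteer notified at time $t$ before time $t$ (i.e., decisions at time $t$ cannot depend on inactivity lengths triggered at times $\ge t$). $\mathbf{LP}_{\mathcal{I}}=\max\sum_{t=1}^T\sum_{s=1}^S\lambda_{s,t}\min\{\sum_{v=1}^V x_{v,s,t}p_{v,s},1\}$ subject to $0\le x_{v,s,t}\le1$ for all $v,s,t$ and $\sum_{\tau=1}^t\sum_{s=1}^S\lambda_{s,\tau}x_{v,s,\tau}(1-G(t-\tau))\le1$ for all $v,t$. *)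

theory Defs
  imports "HOL-Probability.Probability"
begin

(* Indices: volunteers v \<in> {1..V}, task types s \<in> {1..S}, periods t \<in> {1..T}.
   lam s t = \<lambda>_{s,t},  p v s = p_{v,s},  g = pmf of the inactivity length Z. *)

definition G :: "nat pmf \<Rightarrow> nat \<Rightarrow> real" where
  "G g \<tau> = measure_pmf.prob g {1..\<tau>}"

definition LP_feasible :: "nat \<Rightarrow> nat \<Rightarrow> nat \<Rightarrow> (nat \<Rightarrow> nat \<Rightarrow> real) \<Rightarrow> nat pmf
    \<Rightarrow> (nat \<Rightarrow> nat \<Rightarrow> nat \<Rightarrow> real) set" where
  "LP_feasible V S T lam g =
     {x. (\<forall>v\<in>{1..V}. \<forall>s\<in>{1..S}. \<forall>t\<in>{1..T}. 0 \<le> x v s t \<and> x v s t \<le> 1) \<and>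
         (\<forall>v\<in>{1..V}. \<forall>t\<in>{1..T}.
            (\<Sum>\<tau>\<in>{1..t}. \<Sum>s\<in>{1..S}. lam s \<tau> * x v s \<tau> * (1 - G g (t - \<tau>))) \<le> 1)}"

definition LP_obj :: "nat \<Rightarrow> nat \<Rightarrow> nat \<Rightarrow> (nat \<Rightarrow> nat \<Rightarrow> real) \<Rightarrow> (nat \<Rightarrow> nat \<Rightarrow> real)
    \<Rightarrow> (nat \<Rightarrow> nat \<Rightarrow> nat \<Rightarrow> real) \<Rightarrow> real" where
  "LP_obj V S T lam p x =
     (\<Sum>t\<in>{1..T}. \<Sum>s\<in>{1..S}. lam s t * min (\<Sum>v\<in>{1..V}. x v s t * p v s) 1)"

definition LP_value :: "nat \<Rightarrow> nat \<Rightarrow> nat \<Rightarrow> (nat \<Rightarrow> nat \<Rightarrow> real) \<Rightarrow> (nat \<Rightarrow> nat \<Rightarrow> real)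
    \<Rightarrow> nat pmf \<Rightarrow> real" where
  "LP_value V S T lam p g = Sup (LP_obj V S T lam p ` LP_feasible V S T lam g)"

(* Randomness of a scenario:
   a :: arrivals,   a t = None (no task at t) or Some s (task of type s at t);
   z :: (v,t) \<mapsto> inactivity length triggered if v is active and notified at t (iid ~ g);
   r :: (v,s,t) \<mapsto> response of v if notified, active, for a task of type s at t (Bernoulli p v s). *)
type_synonym arrivals = "nat \<Rightarrow> nat option"
type_synonym zs = "nat \<times> nat \<Rightarrow> nat"
type_synonym rs = "nat \<times> nat \<times> nat \<Rightarrow> bool"
(* a (deterministic) notification strategy: period t, full arrival sequence,
   inactivity lengths and responses  \<mapsto>  set of notified volunteers *)
type_synonym policy = "nat \<Rightarrow> arrivals \<Rightarrow> zs \<Rightarrow> rs \<Rightarrow> nat set"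

(* clairvoyant information structure: the decision at time t may depend on the whole
   arrival sequence, but on inactivity lengths / responses only of periods < t *)
definition nonanticipating :: "policy \<Rightarrow> bool" where
  "nonanticipating \<pi> \<longleftrightarrow>
     (\<forall>t a z z' r r'. (\<forall>v \<tau>. \<tau> < t \<longrightarrow> z (v, \<tau>) = z' (v, \<tau>)) \<and>
                      (\<forall>v s \<tau>. \<tau> < t \<longrightarrow> r (v, s, \<tau>) = r' (v, s, \<tau>))
                      \<longrightarrow> \<pi> t a z r = \<pi> t a z' r')"

(* ready V \<pi> a z r t v = first period from which v is active, after periods 1..t
   have been processed; v is active at period t' iff ready ... (t'-1) v \<le> t'. *)
fun ready :: "nat \<Rightarrow> policy \<Rightarrow> arrivals \<Rightarrow> zs \<Rightarrow> rs \<Rightarrow> nat \<Rightarrow> nat \<Rightarrow> nat" where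
  "ready V \<pi> a z r 0 = (\<lambda>v. 0)"
| "ready V \<pi> a z r (Suc t) =
     (let rd = ready V \<pi> a z r t in
      case a (Suc t) of
        None \<Rightarrow> rd
      | Some s \<Rightarrow> (\<lambda>v. if v \<in> {1..V} \<and> v \<in> \<pi> (Suc t) a z r \<and> rd v \<le> Suc t
                       then Suc t + z (v, Suc t) else rd v))"

definition completed :: "nat \<Rightarrow> policy \<Rightarrow> arrivals \<Rightarrow> zs \<Rightarrow> rs \<Rightarrow> nat \<Rightarrow> bool" where
  "completed V \<pi> a z r t =
     (case a t of
        None \<Rightarrow> False
      | Some s \<Rightarrow> (\<exists>v\<in>{1..V}. v \<in> \<pi> t a z r \<and> ready V \<pi> a z r (t - 1) v \<le> t \<and> r (v, s, t)))"

definition num_completed :: "nat \<Rightarrow> nat \<Rightarrow> policy \<Rightarrow> arrivals \<Rightarrow> zs \<Rightarrow> rs \<Rightarrow> nat" where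
  "num_completed V T \<pi> a z r = card {t\<in>{1..T}. completed V \<pi> a z r t}"

definition arrival_pmf :: "nat \<Rightarrow> (nat \<Rightarrow> nat \<Rightarrow> real) \<Rightarrow> nat \<Rightarrow> nat option pmf" where
  "arrival_pmf S lam t = embed_pmf (\<lambda>oa. case oa of
       None \<Rightarrow> 1 - (\<Sum>s\<in>{1..S}. lam s t)
     | Some s \<Rightarrow> (if s \<in> {1..S} then lam s t else 0))"

definition scenario_pmf :: "nat \<Rightarrow> nat \<Rightarrow> nat \<Rightarrow> (nat \<Rightarrow> nat \<Rightarrow> real) \<Rightarrow> (nat \<Rightarrow> nat \<Rightarrow> real)
    \<Rightarrow> nat pmf \<Rightarrow> (arrivals \<times> zs \<times> rs) pmf" where
  "scenario_pmf V S T lam p g =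
     pair_pmf (Pi_pmf {1..T} None (arrival_pmf S lam))
       (pair_pmf (Pi_pmf ({1..V} \<times> {1..T}) 0 (\<lambda>_. g))
                 (Pi_pmf ({1..V} \<times> {1..S} \<times> {1..T}) False
                         (\<lambda>(v, s, t). bernoulli_pmf (p v s))))"

definition expected_completed :: "nat \<Rightarrow> nat \<Rightarrow> nat \<Rightarrow> (nat \<Rightarrow> nat \<Rightarrow> real) \<Rightarrow> (nat \<Rightarrow> nat \<Rightarrow> real)
    \<Rightarrow> nat pmf \<Rightarrow> policy \<Rightarrow> real" where
  "expected_completed V S T lam p g \<pi> =
     measure_pmf.expectation (scenario_pmf V S T lam p g)
       (\<lambda>(a, z, r). real (num_completed V T \<pi> a z r))"

definition clairvoyant_value :: "nat \<Rightarrow> nat \<Rightarrow> nat \<Rightarrow> (nat \<Rightarrow> nat \<Rightarrow> real) \<Rightarrow> (nat \<Rightarrow> nat \<Rightarrow> real)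
    \<Rightarrow> nat pmf \<Rightarrow> real" where
  "clairvoyant_value V S T lam p g =
     Sup (expected_completed V S T lam p g ` {\<pi>. nonanticipating \<pi>})"

end

theory Submission
  imports Defs
begin


lemma measure_bind_pmf':
  "measure_pmf.prob (bind_pmf M N) X = (\<integral>x. measure_pmf.prob (N x) X \<partial>M)"
proof -
  have "ennreal (measure_pmf.prob (bind_pmf M N) X) = emeasure (bind_pmf M N) X"
    by (simp add: measure_pmf.emeasure_eq_measure)
  also have "\<dots> = (\<integral>\<^sup>+x. emeasure (N x) X \<partial>M)" by simp
  also have "\<dots> = (\<integral>\<^sup>+x. ennreal (measure_pmf.prob (N x) X) \<partial>M)"
    by (simp add: measure_pmf.emeasure_eq_measure)
  also have "\<dots> = ennreal (\<integral>x. measure_pmf.prob (N x) X \<partial>M)"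
    by (intro nn_integral_eq_integral measure_pmf.integrable_const_bound[where B=1]) auto
  finally show ?thesis
    by (simp add: integral_nonneg)
qed

lemma measure_pair_pmf':
  "measure_pmf.prob (pair_pmf A B) X = (\<integral>a. measure_pmf.prob B {b. (a, b) \<in> X} \<partial>A)"
proof -
  have "pair_pmf A B = bind_pmf A (\<lambda>a. map_pmf (Pair a) B)"
    by (simp add: pair_pmf_def map_pmf_def)
  then show ?thesis by (simp add: measure_bind_pmf' vimage_def)
qed

lemma pair_indep2:
  assumes "\<And>x. measure_pmf.prob N {y. (x, y) \<in> X \<and> R y} = measure_pmf.prob N {y. (x, y) \<in> X} * c"
  shows "measure_pmf.prob (pair_pmf M N) {w. w \<in> X \<and> R (snd w)} = measure_pmf.prob (pair_pmf M N) X * c"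
  by (simp add: measure_pair_pmf' assms)

lemma pair_indep1:
  assumes "\<And>y. measure_pmf.prob M {x. (x, y) \<in> X \<and> R x} = measure_pmf.prob M {x. (x, y) \<in> X} * c"
  shows "measure_pmf.prob (pair_pmf M N) {w. w \<in> X \<and> R (fst w)} = measure_pmf.prob (pair_pmf M N) X * c"
proof -
  let ?sw = "\<lambda>(x, y). (y, x)"
  have e1: "measure_pmf.prob (pair_pmf M N) {w. w \<in> X \<and> R (fst w)} =
      measure_pmf.prob (pair_pmf N M) {w. w \<in> ?sw -` X \<and> R (snd w)}"
    by (subst pair_commute_pmf) (simp add: vimage_def case_prod_beta)
  have e2: "measure_pmf.prob (pair_pmf M N) X = measure_pmf.prob (pair_pmf N M) (?sw -` X)"
    by (subst pair_commute_pmf) (simp add: vimage_def case_prod_beta)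
  show ?thesis unfolding e1 e2
    by (rule pair_indep2) (simp add: assms)
qed

lemma Pi_indep:
  assumes fin: "finite I" and i: "i \<in> I" and inv: "\<And>f y. Q (f(i := y)) = Q f"
  shows "measure_pmf.prob (Pi_pmf I d P) {f. Q f \<and> R (f i)} =
         measure_pmf.prob (Pi_pmf I d P) {f. Q f} * measure_pmf.prob (P i) {y. R y}"
proof -
  have I: "I = insert i (I - {i})" using i by auto
  have eq: "Pi_pmf I d P = map_pmf (\<lambda>(y,f). f(i:=y)) (pair_pmf (P i) (Pi_pmf (I - {i}) d P))"
    by (subst I, rule Pi_pmf_insert) (use fin in auto)
  let ?M = "pair_pmf (P i) (Pi_pmf (I - {i}) d P)"
  have e1: "measure_pmf.prob (Pi_pmf I d P) {f. Q f \<and> R (f i)} =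
    measure_pmf.prob ?M {w. w \<in> {(y, f). Q f} \<and> R (fst w)}"
    unfolding eq by (simp add: vimage_def case_prod_beta inv)
  have cs: "{(y, f). Q f} = {x. Q (snd x)}" by auto
  have e2: "measure_pmf.prob (Pi_pmf I d P) {f. Q f} = measure_pmf.prob ?M {(y, f). Q f}"
    unfolding eq cs by (simp add: vimage_def case_prod_beta inv)
  show ?thesis unfolding e1 e2
    by (rule pair_indep1) auto
qed



definition af :: "nat \<Rightarrow> (nat \<Rightarrow> nat \<Rightarrow> real) \<Rightarrow> nat \<Rightarrow> nat option \<Rightarrow> real" where
  "af S lam t = (\<lambda>oa. case oa of
       None \<Rightarrow> 1 - (\<Sum>s\<in>{1..S}. lam s t)
     | Some s \<Rightarrow> (if s \<in> {1..S} then lam s t else 0))"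

lemma af_conds:
  assumes "\<forall>s\<in>{1..S}. 0 \<le> lam s t" "(\<Sum>s\<in>{1..S}. lam s t) \<le> 1"
  shows "\<And>x. 0 \<le> af S lam t x" "(\<integral>\<^sup>+x. af S lam t x \<partial>count_space UNIV) = 1"
proof -
  show nn: "\<And>x. 0 \<le> af S lam t x" using assms by (auto simp: af_def split: option.splits)
  let ?A = "insert None (Some ` {1..S})"
  have "(\<integral>\<^sup>+x. af S lam t x \<partial>count_space UNIV) = (\<Sum>x\<in>?A. ennreal (af S lam t x))"
    by (rule nn_integral_count_space') (auto simp: af_def split: option.splits)
  also have "\<dots> = ennreal (\<Sum>x\<in>?A. af S lam t x)"
    using nn by (simp add: sum_ennreal)
  also have "(\<Sum>x\<in>?A. af S lam t x) = af S lam t None + (\<Sum>x\<in>Some ` {1..S}. af S lam t x)"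
    by (subst sum.insert) auto
  also have "(\<Sum>x\<in>Some ` {1..S}. af S lam t x) = (\<Sum>s\<in>{1..S}. lam s t)"
    by (subst sum.reindex) (auto simp: af_def)
  finally show "(\<integral>\<^sup>+x. af S lam t x \<partial>count_space UNIV) = 1" by (simp add: af_def)
qed

lemma arrival_pmf_Some:
  assumes "\<forall>s\<in>{1..S}. 0 \<le> lam s t" "(\<Sum>s\<in>{1..S}. lam s t) \<le> 1"
  shows "pmf (arrival_pmf S lam t) (Some s) = (if s \<in> {1..S} then lam s t else 0)"
proof -
  have eqA: "arrival_pmf S lam t = embed_pmf (af S lam t)" unfolding arrival_pmf_def af_def ..
  have c1: "\<And>x. 0 \<le> af S lam t x" using af_conds[of S lam t] assms by blast
  have c2: "(\<integral>\<^sup>+x. af S lam t x \<partial>count_space UNIV) = 1" using af_conds[of S lam t] assms by blast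
  show ?thesis unfolding eqA using pmf_embed_pmf[of "af S lam t", OF c1 c2] by (simp add: af_def)
qed

lemma arrival_pmf_set:
  assumes "\<forall>s\<in>{1..S}. 0 \<le> lam s t" "(\<Sum>s\<in>{1..S}. lam s t) \<le> 1"
  shows "set_pmf (arrival_pmf S lam t) \<subseteq> insert None (Some ` {1..S})"
proof -
  have eqA: "arrival_pmf S lam t = embed_pmf (af S lam t)" unfolding arrival_pmf_def af_def ..
  have c1: "\<And>x. 0 \<le> af S lam t x" using af_conds[of S lam t] assms by blast
  have c2: "(\<integral>\<^sup>+x. af S lam t x \<partial>count_space UNIV) = 1" using af_conds[of S lam t] assms by blast
  show ?thesis
  proof
    fix x assume "x \<in> set_pmf (arrival_pmf S lam t)"
    then have "af S lam t x \<noteq> 0" unfolding eqA using set_embed_pmf[of "af S lam t", OF c1 c2] by simp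
    then show "x \<in> insert None (Some ` {1..S})"
      by (cases x) (auto simp: af_def split: if_splits)
  qed
qed

lemma prob_gt_G:
  assumes "0 \<notin> set_pmf g"
  shows "measure_pmf.prob g {n. n > k} = 1 - G g k"
proof -
  have "measure_pmf.prob g {n. n > k} = 1 - measure_pmf.prob g {..k}"
  proof -
    have "{n. n > k} = UNIV - {..k}" by auto
    then show ?thesis using measure_pmf.prob_compl[of "{..k}" g] by simp
  qed
  moreover have "measure_pmf.prob g {..k} = measure_pmf.prob g {0} + measure_pmf.prob g {1..k}"
  proof -
    have "{..k} = {0} \<union> {1..k}" by auto
    moreover have "measure_pmf.prob g ({0} \<union> {1..k}) = measure_pmf.prob g {0} + measure_pmf.prob g {1..k}"
      by (rule measure_pmf.finite_measure_Union) auto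
    ultimately show ?thesis by simp
  qed
  moreover have "measure_pmf.prob g {0} = 0"
    using assms by (simp add: measure_pmf_single set_pmf_iff)
  ultimately show ?thesis by (simp add: G_def)
qed

lemma triple_indep_r:
  assumes "\<And>a z. measure_pmf.prob C {r. Q (a, z, r) \<and> R r} = measure_pmf.prob C {r. Q (a, z, r)} * c"
  shows "measure_pmf.prob (pair_pmf A (pair_pmf B C)) {w. Q w \<and> R (snd (snd w))} =
         measure_pmf.prob (pair_pmf A (pair_pmf B C)) {w. Q w} * c"
proof -
  have "measure_pmf.prob (pair_pmf A (pair_pmf B C)) {w. w \<in> {w. Q w} \<and> (\<lambda>y. R (snd y)) (snd w)} =
         measure_pmf.prob (pair_pmf A (pair_pmf B C)) {w. Q w} * c"
  proof (rule pair_indep2)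
    fix a
    show "measure_pmf.prob (pair_pmf B C) {y. (a, y) \<in> {w. Q w} \<and> R (snd y)} =
          measure_pmf.prob (pair_pmf B C) {y. (a, y) \<in> {w. Q w}} * c"
      using pair_indep2[of C "{(z, r). Q (a, z, r)}" R c B] assms
      by (simp add: case_prod_beta')
  qed
  then show ?thesis by simp
qed

lemma triple_indep_z:
  assumes "\<And>a r. measure_pmf.prob B {z. Q (a, z, r) \<and> R z} = measure_pmf.prob B {z. Q (a, z, r)} * c"
  shows "measure_pmf.prob (pair_pmf A (pair_pmf B C)) {w. Q w \<and> R (fst (snd w))} =
         measure_pmf.prob (pair_pmf A (pair_pmf B C)) {w. Q w} * c"
proof -
  have "measure_pmf.prob (pair_pmf A (pair_pmf B C)) {w. w \<in> {w. Q w} \<and> (\<lambda>y. R (fst y)) (snd w)} =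
         measure_pmf.prob (pair_pmf A (pair_pmf B C)) {w. Q w} * c"
  proof (rule pair_indep2)
    fix a
    show "measure_pmf.prob (pair_pmf B C) {y. (a, y) \<in> {w. Q w} \<and> R (fst y)} =
          measure_pmf.prob (pair_pmf B C) {y. (a, y) \<in> {w. Q w}} * c"
      using pair_indep1[of B "{(z, r). Q (a, z, r)}" R c C] assms
      by (simp add: case_prod_beta')
  qed
  then show ?thesis by simp
qed

lemma triple_fst:
  "measure_pmf.prob (pair_pmf A D) {w. P (fst w)} = measure_pmf.prob A {a. P a}"
proof -
  have "measure_pmf.prob A {a. P a} = measure_pmf.prob (map_pmf fst (pair_pmf A D)) {a. P a}"
    by (simp only: map_fst_pair_pmf)
  then show ?thesis by (simp add: vimage_def)
qed



definition Aev :: "nat \<Rightarrow> policy \<Rightarrow> arrivals \<Rightarrow> zs \<Rightarrow> rs \<Rightarrow> nat \<Rightarrow> nat \<Rightarrow> nat \<Rightarrow> bool" where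
  "Aev V \<pi> a z r v s \<tau> \<longleftrightarrow> a \<tau> = Some s \<and> v \<in> \<pi> \<tau> a z r \<and> ready V \<pi> a z r (\<tau> - 1) v \<le> \<tau>"

lemma na_eq:
  assumes "nonanticipating \<pi>" "\<And>v \<tau>. \<tau> < t \<Longrightarrow> z (v, \<tau>) = z' (v, \<tau>)"
    "\<And>v s \<tau>. \<tau> < t \<Longrightarrow> r (v, s, \<tau>) = r' (v, s, \<tau>)"
  shows "\<pi> t a z r = \<pi> t a z' r'"
proof -
  from assms(1) have H: "\<forall>t a z z' r r'. (\<forall>v \<tau>. \<tau> < t \<longrightarrow> z (v, \<tau>) = z' (v, \<tau>)) \<and>
                      (\<forall>v s \<tau>. \<tau> < t \<longrightarrow> r (v, s, \<tau>) = r' (v, s, \<tau>))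
                      \<longrightarrow> \<pi> t a z r = \<pi> t a z' r'" unfolding nonanticipating_def .
  have c: "(\<forall>v \<tau>. \<tau> < t \<longrightarrow> z (v, \<tau>) = z' (v, \<tau>)) \<and> (\<forall>v s \<tau>. \<tau> < t \<longrightarrow> r (v, s, \<tau>) = r' (v, s, \<tau>))"
    using assms(2,3) by simp
  show ?thesis using H c by (elim allE impE) 
qed

lemma ready_dep:
  assumes na: "nonanticipating \<pi>"
  shows "(\<And>v \<tau>. \<tau> \<le> t \<Longrightarrow> z (v, \<tau>) = z' (v, \<tau>)) \<Longrightarrow> (\<And>v s \<tau>. \<tau> < t \<Longrightarrow> r (v, s, \<tau>) = r' (v, s, \<tau>))
     \<Longrightarrow> ready V \<pi> a z r t = ready V \<pi> a z' r' t"
proof (induction t)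
  case 0
  then show ?case by simp
next
  case (Suc t)
  have IH: "ready V \<pi> a z r t = ready V \<pi> a z' r' t"
    using Suc.prems by (intro Suc.IH) auto
  have pe: "\<pi> (Suc t) a z r = \<pi> (Suc t) a z' r'"
    using Suc.prems by (intro na_eq[OF na]) auto
  have ze: "\<And>v. z (v, Suc t) = z' (v, Suc t)" using Suc.prems by simp
  show ?case unfolding ready.simps Let_def IH pe ze ..
qed

lemma Aev_z_inv:
  assumes na: "nonanticipating \<pi>" and t1: "1 \<le> \<tau>"
  shows "Aev V \<pi> a (z((v', \<tau>) := y)) r v s \<tau> = Aev V \<pi> a z r v s \<tau>"
proof -
  have pe: "\<pi> \<tau> a (z((v', \<tau>) := y)) r = \<pi> \<tau> a z r"
    by (intro na_eq[OF na]) auto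
  have re: "ready V \<pi> a (z((v', \<tau>) := y)) r (\<tau> - 1) = ready V \<pi> a z r (\<tau> - 1)"
    using t1 by (intro ready_dep[OF na]) auto
  show ?thesis unfolding Aev_def pe re ..
qed

lemma Aev_r_inv:
  assumes na: "nonanticipating \<pi>" and t1: "1 \<le> \<tau>"
  shows "Aev V \<pi> a z (r((v', s', \<tau>) := y)) v s \<tau> = Aev V \<pi> a z r v s \<tau>"
proof -
  have pe: "\<pi> \<tau> a z (r((v', s', \<tau>) := y)) = \<pi> \<tau> a z r"
    by (intro na_eq[OF na]) auto
  have re: "ready V \<pi> a z (r((v', s', \<tau>) := y)) (\<tau> - 1) = ready V \<pi> a z r (\<tau> - 1)"
    using t1 by (intro ready_dep[OF na]) auto
  show ?thesis unfolding Aev_def pe re ..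
qed

lemma ready_mono_Suc: "ready V \<pi> a z r t v \<le> ready V \<pi> a z r (Suc t) v"
proof (cases "a (Suc t)")
  case None
  then show ?thesis by simp
next
  case (Some s)
  then show ?thesis by (simp add: Let_def)
qed

lemma ready_mono: "t \<le> t' \<Longrightarrow> ready V \<pi> a z r t v \<le> ready V \<pi> a z r t' v"
  using lift_Suc_mono_le[of "\<lambda>t. ready V \<pi> a z r t v", OF ready_mono_Suc] by blast

lemma ready_set:
  assumes "1 \<le> \<tau>" "v \<in> {1..V}" "Aev V \<pi> a z r v s \<tau>"
  shows "ready V \<pi> a z r \<tau> v = \<tau> + z (v, \<tau>)"
proof -
  obtain k where k: "\<tau> = Suc k" using assms(1) by (cases \<tau>) auto
  from assms(3) have h: "a (Suc k) = Some s" "v \<in> \<pi> (Suc k) a z r" "ready V \<pi> a z r k v \<le> Suc k"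
    unfolding Aev_def k by auto
  show ?thesis unfolding k using h assms(2) by (simp add: Let_def)
qed

lemma completed_iff:
  assumes "1 \<le> t"
  shows "completed V \<pi> a z r t \<longleftrightarrow> (\<exists>s. a t = Some s \<and> (\<exists>v\<in>{1..V}. Aev V \<pi> a z r v s t \<and> r (v, s, t)))"
proof (cases "a t")
  case None
  then show ?thesis by (simp add: completed_def)
next
  case (Some s0)
  have "completed V \<pi> a z r t \<longleftrightarrow> (\<exists>v\<in>{1..V}. v \<in> \<pi> t a z r \<and> ready V \<pi> a z r (t - 1) v \<le> t \<and> r (v, s0, t))"
    using Some by (simp add: completed_def)
  also have "\<dots> \<longleftrightarrow> (\<exists>s. a t = Some s \<and> (\<exists>v\<in>{1..V}. Aev V \<pi> a z r v s t \<and> r (v, s, t)))"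
  proof
    assume "\<exists>v\<in>{1..V}. v \<in> \<pi> t a z r \<and> ready V \<pi> a z r (t - 1) v \<le> t \<and> r (v, s0, t)"
    then obtain v where v: "v \<in> {1..V}" "v \<in> \<pi> t a z r" "ready V \<pi> a z r (t - 1) v \<le> t" "r (v, s0, t)"
      by blast
    have "Aev V \<pi> a z r v s0 t" unfolding Aev_def using Some v by simp
    then show "\<exists>s. a t = Some s \<and> (\<exists>v\<in>{1..V}. Aev V \<pi> a z r v s t \<and> r (v, s, t))"
      using Some v by blast
  next
    assume "\<exists>s. a t = Some s \<and> (\<exists>v\<in>{1..V}. Aev V \<pi> a z r v s t \<and> r (v, s, t))"
    then obtain s v where sv: "a t = Some s" "v \<in> {1..V}" "Aev V \<pi> a z r v s t" "r (v, s, t)"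
      by blast
    have "s = s0" using sv(1) Some by simp
    then show "\<exists>v\<in>{1..V}. v \<in> \<pi> t a z r \<and> ready V \<pi> a z r (t - 1) v \<le> t \<and> r (v, s0, t)"
      using sv unfolding Aev_def by blast
  qed
  finally show ?thesis .
qed

lemma Aev_disj:
  assumes "v \<in> {1..V}" "1 \<le> \<tau>" "\<tau> < \<tau>'" "\<tau>' \<le> t" "Aev V \<pi> a z r v s \<tau>" "z (v, \<tau>) > t - \<tau>"
  shows "\<not> Aev V \<pi> a z r v s' \<tau>'"
proof
  assume A': "Aev V \<pi> a z r v s' \<tau>'"
  have "ready V \<pi> a z r \<tau> v = \<tau> + z (v, \<tau>)" using ready_set[OF assms(2,1,5)] .
  moreover have "ready V \<pi> a z r \<tau> v \<le> ready V \<pi> a z r (\<tau>' - 1) v"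
    using assms by (intro ready_mono) auto
  moreover have "ready V \<pi> a z r (\<tau>' - 1) v \<le> \<tau>'" using A' by (simp add: Aev_def)
  moreover have "t < \<tau> + z (v, \<tau>)" using assms(3,4,6) by simp
  ultimately show False using assms(4) by simp
qed



context
  fixes V S T :: nat and lam p :: "nat \<Rightarrow> nat \<Rightarrow> real" and g :: "nat pmf" and \<pi> :: policy
  assumes lam_nn: "\<forall>s\<in>{1..S}. \<forall>t\<in>{1..T}. 0 \<le> lam s t"
    and lam_sum: "\<forall>t\<in>{1..T}. (\<Sum>s\<in>{1..S}. lam s t) \<le> 1"
    and p01: "\<forall>v\<in>{1..V}. \<forall>s\<in>{1..S}. 0 \<le> p v s \<and> p v s \<le> 1"
    and g0: "0 \<notin> set_pmf g"
    and na: "nonanticipating \<pi>"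
begin

definition Ev :: "nat \<Rightarrow> nat \<Rightarrow> nat \<Rightarrow> (arrivals \<times> zs \<times> rs) set" where
  "Ev v s t = {w. Aev V \<pi> (fst w) (fst (snd w)) (snd (snd w)) v s t}"

definition xx :: "nat \<Rightarrow> nat \<Rightarrow> nat \<Rightarrow> real" where
  "xx v s t = measure_pmf.prob (scenario_pmf V S T lam p g) (Ev v s t) / lam s t"

lemma prob_arr:
  assumes t: "t \<in> {1..T}"
  shows "measure_pmf.prob (scenario_pmf V S T lam p g) {w. fst w t \<in> X} = measure_pmf.prob (arrival_pmf S lam t) X"
proof -
  let ?PA = "Pi_pmf {1..T} None (arrival_pmf S lam)"
  have "measure_pmf.prob (scenario_pmf V S T lam p g) {w. fst w t \<in> X} = measure_pmf.prob ?PA {a. a t \<in> X}"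
    unfolding scenario_pmf_def by (rule triple_fst)
  also have "\<dots> = measure_pmf.prob (map_pmf (\<lambda>a. a t) ?PA) X" by (simp add: vimage_def)
  also have "map_pmf (\<lambda>a. a t) ?PA = arrival_pmf S lam t"
    using Pi_pmf_component[of "{1..T}" t None "arrival_pmf S lam"] t by simp
  finally show ?thesis .
qed

lemma lam_t: "t \<in> {1..T} \<Longrightarrow> \<forall>s\<in>{1..S}. 0 \<le> lam s t"
  using lam_nn by blast

lemma lam_t2: "t \<in> {1..T} \<Longrightarrow> (\<Sum>s\<in>{1..S}. lam s t) \<le> 1"
  using lam_sum by blast

lemma prob_Some:
  assumes "t \<in> {1..T}" "s \<in> {1..S}"
  shows "measure_pmf.prob (scenario_pmf V S T lam p g) {w. fst w t = Some s} = lam s t"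
proof -
  have "measure_pmf.prob (scenario_pmf V S T lam p g) {w. fst w t = Some s} =
        measure_pmf.prob (arrival_pmf S lam t) {Some s}" using prob_arr[OF assms(1), of "{Some s}"] by simp
  also have "\<dots> = pmf (arrival_pmf S lam t) (Some s)"
    by (rule measure_pmf_single)
  also have "\<dots> = lam s t" using arrival_pmf_Some[of S lam t s, OF lam_t[OF assms(1)] lam_t2[OF assms(1)]] assms(2) by simp
  finally show ?thesis .
qed

lemma prob_bad:
  assumes "t \<in> {1..T}"
  shows "measure_pmf.prob (scenario_pmf V S T lam p g) {w. fst w t \<notin> insert None (Some ` {1..S})} = 0"
proof -
  have "measure_pmf.prob (scenario_pmf V S T lam p g) {w. fst w t \<notin> insert None (Some ` {1..S})} =
        measure_pmf.prob (arrival_pmf S lam t) (- insert None (Some ` {1..S}))"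
    using prob_arr[OF assms(1), of "- insert None (Some ` {1..S})"] by simp
  also have "\<dots> = 0"
    using arrival_pmf_set[of S lam t, OF lam_t[OF assms(1)] lam_t2[OF assms(1)]] by (subst measure_pmf_zero_iff) auto
  finally show ?thesis .
qed

lemma Ev_le:
  assumes "t \<in> {1..T}" "s \<in> {1..S}"
  shows "measure_pmf.prob (scenario_pmf V S T lam p g) (Ev v s t) \<le> lam s t"
proof -
  have "measure_pmf.prob (scenario_pmf V S T lam p g) (Ev v s t) \<le>
        measure_pmf.prob (scenario_pmf V S T lam p g) {w. fst w t = Some s}"
    by (rule measure_pmf.finite_measure_mono) (auto simp: Ev_def Aev_def)
  then show ?thesis using prob_Some[OF assms] by simp
qed

lemma lam_xx:
  assumes "t \<in> {1..T}" "s \<in> {1..S}"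
  shows "lam s t * xx v s t = measure_pmf.prob (scenario_pmf V S T lam p g) (Ev v s t)"
proof (cases "lam s t = 0")
  case True
  then have "measure_pmf.prob (scenario_pmf V S T lam p g) (Ev v s t) = 0"
    using Ev_le[OF assms, of v] measure_nonneg[of "measure_pmf (scenario_pmf V S T lam p g)" "Ev v s t"] by simp
  then show ?thesis using True by simp
next
  case False
  then show ?thesis by (simp add: xx_def)
qed

lemma xx_bounds:
  assumes "t \<in> {1..T}" "s \<in> {1..S}"
  shows "0 \<le> xx v s t" "xx v s t \<le> 1"
proof -
  have l: "0 \<le> lam s t" using lam_nn assms by blast
  show "0 \<le> xx v s t" unfolding xx_def using l by simp
  show "xx v s t \<le> 1"
  proof (cases "lam s t = 0")
    case True then show ?thesis by (simp add: xx_def)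
  next
    case False
    then have "0 < lam s t" using l by simp
    then show ?thesis unfolding xx_def using Ev_le[OF assms, of v] by simp
  qed
qed

lemma Ev_r:
  assumes v: "v \<in> {1..V}" and s: "s \<in> {1..S}" and t: "t \<in> {1..T}"
  shows "measure_pmf.prob (scenario_pmf V S T lam p g) {w. w \<in> Ev v s t \<and> snd (snd w) (v, s, t)} =
         measure_pmf.prob (scenario_pmf V S T lam p g) (Ev v s t) * p v s"
proof -
  let ?PR = "Pi_pmf ({1..V} \<times> {1..S} \<times> {1..T}) False (\<lambda>(v, s, t). bernoulli_pmf (p v s))"
  have pb: "measure_pmf.prob (bernoulli_pmf (p v s)) {y. y} = p v s"
  proof -
    have "{y::bool. y} = {True}" by auto
    then show ?thesis using p01 v s by (simp add: measure_pmf_single)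
  qed
  have inner: "measure_pmf.prob ?PR {r. Aev V \<pi> a z r v s t \<and> r (v, s, t)} =
               measure_pmf.prob ?PR {r. Aev V \<pi> a z r v s t} * p v s" for a z
    using Pi_indep[of "{1..V} \<times> {1..S} \<times> {1..T}" "(v, s, t)" "\<lambda>r. Aev V \<pi> a z r v s t" False
        "\<lambda>(v, s, t). bernoulli_pmf (p v s)" "\<lambda>b. b"] v s t Aev_r_inv[OF na] pb
    by auto
  show ?thesis unfolding scenario_pmf_def Ev_def
    using triple_indep_r[where Q="\<lambda>w. Aev V \<pi> (fst w) (fst (snd w)) (snd (snd w)) v s t"
        and R="\<lambda>r. r (v, s, t)" and c="p v s" and C="?PR"] inner by simp
qed

lemma Ev_z:
  assumes v: "v \<in> {1..V}" and t: "\<tau> \<in> {1..T}"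
  shows "measure_pmf.prob (scenario_pmf V S T lam p g) {w. w \<in> Ev v s \<tau> \<and> fst (snd w) (v, \<tau>) > k} =
         measure_pmf.prob (scenario_pmf V S T lam p g) (Ev v s \<tau>) * (1 - G g k)"
proof -
  let ?PZ = "Pi_pmf ({1..V} \<times> {1..T}) 0 (\<lambda>_. g)"
  have inner: "measure_pmf.prob ?PZ {z. Aev V \<pi> a z r v s \<tau> \<and> z (v, \<tau>) > k} =
               measure_pmf.prob ?PZ {z. Aev V \<pi> a z r v s \<tau>} * (1 - G g k)" for a r
    using Pi_indep[of "{1..V} \<times> {1..T}" "(v, \<tau>)" "\<lambda>z. Aev V \<pi> a z r v s \<tau>" 0
        "\<lambda>_. g" "\<lambda>n. n > k"] v t Aev_z_inv[OF na] prob_gt_G[OF g0]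
    by auto
  show ?thesis unfolding scenario_pmf_def Ev_def
    using triple_indep_z[where Q="\<lambda>w. Aev V \<pi> (fst w) (fst (snd w)) (snd (snd w)) v s \<tau>"
        and R="\<lambda>z. z (v, \<tau>) > k" and c="1 - G g k" and B="?PZ"] inner by simp
qed


lemma compl_le:
  assumes t: "t \<in> {1..T}"
  shows "measure_pmf.prob (scenario_pmf V S T lam p g)
           {w. completed V \<pi> (fst w) (fst (snd w)) (snd (snd w)) t}
         \<le> (\<Sum>s\<in>{1..S}. lam s t * min (\<Sum>v\<in>{1..V}. xx v s t * p v s) 1)"
proof -
  let ?M = "scenario_pmf V S T lam p g"
  define C where "C s = {w. fst w t = Some s \<and> (\<exists>v\<in>{1..V}. w \<in> Ev v s t \<and> snd (snd w) (v, s, t))}" for s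
  define Bad where "Bad = {w::arrivals \<times> zs \<times> rs. fst w t \<notin> insert None (Some ` {1..S})}"
  have t1: "1 \<le> t" using t by simp
  have sub: "{w. completed V \<pi> (fst w) (fst (snd w)) (snd (snd w)) t} \<subseteq> (\<Union>s\<in>{1..S}. C s) \<union> Bad"
  proof
    fix w assume "w \<in> {w. completed V \<pi> (fst w) (fst (snd w)) (snd (snd w)) t}"
    then obtain s where s: "fst w t = Some s" and ex: "\<exists>v\<in>{1..V}. w \<in> Ev v s t \<and> snd (snd w) (v, s, t)"
      using completed_iff[OF t1] unfolding Ev_def by fastforce
    show "w \<in> (\<Union>s\<in>{1..S}. C s) \<union> Bad"
    proof (cases "s \<in> {1..S}")
      case True then show ?thesis using s ex unfolding C_def by blast
    next
      case False then show ?thesis using s unfolding Bad_def by auto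
    qed
  qed
  have s0: "measure_pmf.prob ?M {w. completed V \<pi> (fst w) (fst (snd w)) (snd (snd w)) t}
        \<le> measure_pmf.prob ?M ((\<Union>s\<in>{1..S}. C s) \<union> Bad)"
    using sub by (intro measure_pmf.finite_measure_mono) auto
  have s1: "measure_pmf.prob ?M ((\<Union>s\<in>{1..S}. C s) \<union> Bad) \<le> measure_pmf.prob ?M (\<Union>s\<in>{1..S}. C s) + measure_pmf.prob ?M Bad"
    by (rule measure_Un_le) auto
  have s2: "measure_pmf.prob ?M Bad = 0" unfolding Bad_def by (rule prob_bad[OF t])
  have s3: "measure_pmf.prob ?M (\<Union>s\<in>{1..S}. C s) \<le> (\<Sum>s\<in>{1..S}. measure_pmf.prob ?M (C s))"
    by (rule measure_pmf.finite_measure_subadditive_finite) auto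
  have s4: "(\<Sum>s\<in>{1..S}. measure_pmf.prob ?M (C s)) \<le> (\<Sum>s\<in>{1..S}. lam s t * min (\<Sum>v\<in>{1..V}. xx v s t * p v s) 1)"
  proof (rule sum_mono)
    fix s assume s: "s \<in> {1..S}"
    have l: "0 \<le> lam s t" using lam_nn s t by blast
    have b1: "measure_pmf.prob ?M (C s) \<le> lam s t"
    proof -
      have "measure_pmf.prob ?M (C s) \<le> measure_pmf.prob ?M {w. fst w t = Some s}"
        by (rule measure_pmf.finite_measure_mono) (auto simp: C_def)
      then show ?thesis using prob_Some[OF t s] by simp
    qed
    have b2: "measure_pmf.prob ?M (C s) \<le> lam s t * (\<Sum>v\<in>{1..V}. xx v s t * p v s)"
    proof -
      have "measure_pmf.prob ?M (C s) \<le>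
            measure_pmf.prob ?M (\<Union>v\<in>{1..V}. {w. w \<in> Ev v s t \<and> snd (snd w) (v, s, t)})"
        by (rule measure_pmf.finite_measure_mono) (auto simp: C_def)
      also have "\<dots> \<le> (\<Sum>v\<in>{1..V}. measure_pmf.prob ?M {w. w \<in> Ev v s t \<and> snd (snd w) (v, s, t)})"
        by (rule measure_pmf.finite_measure_subadditive_finite) auto
      also have "\<dots> = (\<Sum>v\<in>{1..V}. lam s t * (xx v s t * p v s))"
      proof (rule sum.cong)
        fix v assume v: "v \<in> {1..V}"
        show "measure_pmf.prob ?M {w. w \<in> Ev v s t \<and> snd (snd w) (v, s, t)} = lam s t * (xx v s t * p v s)"
          using Ev_r[OF v s t] lam_xx[OF t s, of v] by (simp add: mult.assoc)
      qed simp
      also have "\<dots> = lam s t * (\<Sum>v\<in>{1..V}. xx v s t * p v s)"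
        by (simp add: sum_distrib_left)
      finally show ?thesis .
    qed
    show "measure_pmf.prob ?M (C s) \<le> lam s t * min (\<Sum>v\<in>{1..V}. xx v s t * p v s) 1"
    proof (cases "(\<Sum>v\<in>{1..V}. xx v s t * p v s) \<le> 1")
      case True then show ?thesis using b2 by (simp add: min_def)
    next
      case False then show ?thesis using b1 by (simp add: min_def)
    qed
  qed
  show ?thesis using s0 s1 s2 s3 s4 by linarith
qed

lemma constr:
  assumes v: "v \<in> {1..V}" and t: "t \<in> {1..T}"
  shows "(\<Sum>\<tau>\<in>{1..t}. \<Sum>s\<in>{1..S}. lam s \<tau> * xx v s \<tau> * (1 - G g (t - \<tau>))) \<le> 1"
proof -
  let ?M = "scenario_pmf V S T lam p g"
  define B where "B = (\<lambda>(\<tau>, s). {w. w \<in> Ev v s \<tau> \<and> fst (snd w) (v, \<tau>) > t - \<tau>})"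
  have disj: "disjoint_family_on B ({1..t} \<times> {1..S})"
    unfolding disjoint_family_on_def
  proof (intro ballI impI)
    fix m n assume m: "m \<in> {1..t} \<times> {1..S}" and n: "n \<in> {1..t} \<times> {1..S}" and mn: "m \<noteq> n"
    obtain \<tau> s where m': "m = (\<tau>, s)" by (cases m)
    obtain \<tau>' s' where n': "n = (\<tau>', s')" by (cases n)
    show "B m \<inter> B n = {}"
    proof (rule equals0I)
    fix w assume wmn: "w \<in> B m \<inter> B n"
    have w1: "w \<in> B (\<tau>, s)" and w2: "w \<in> B (\<tau>', s')" using wmn m' n' by auto
    have a: "\<tau> \<in> {1..t}" "s \<in> {1..S}" "\<tau>' \<in> {1..t}" "s' \<in> {1..S}" "(\<tau>, s) \<noteq> (\<tau>', s')"
      using m n mn m' n' by auto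
    obtain a0 z0 r0 where w: "w = (a0, z0, r0)" by (cases w) auto
    have A1: "Aev V \<pi> a0 z0 r0 v s \<tau>" "z0 (v, \<tau>) > t - \<tau>"
      using w1 unfolding B_def Ev_def w by auto
    have A2: "Aev V \<pi> a0 z0 r0 v s' \<tau>'" "z0 (v, \<tau>') > t - \<tau>'"
      using w2 unfolding B_def Ev_def w by auto
    consider "\<tau> = \<tau>'" | "\<tau> < \<tau>'" | "\<tau>' < \<tau>" by linarith
    then show False
    proof cases
      case 1
      then have "s \<noteq> s'" using a by auto
      then show ?thesis using A1 A2 1 unfolding Aev_def by auto
    next
      case 2
      then show ?thesis using Aev_disj[OF v _ 2 _ A1, of s'] A2 a by auto
    next
      case 3
      then show ?thesis using Aev_disj[OF v _ 3 _ A2, of s] A1 a by auto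
    qed
    qed
  qed
  have "(\<Sum>\<tau>\<in>{1..t}. \<Sum>s\<in>{1..S}. lam s \<tau> * xx v s \<tau> * (1 - G g (t - \<tau>))) =
        (\<Sum>\<tau>\<in>{1..t}. \<Sum>s\<in>{1..S}. measure_pmf.prob ?M (B (\<tau>, s)))"
  proof (intro sum.cong refl)
    fix \<tau> s assume \<tau>: "\<tau> \<in> {1..t}" and s: "s \<in> {1..S}"
    have \<tau>T: "\<tau> \<in> {1..T}" using \<tau> t by auto
    show "lam s \<tau> * xx v s \<tau> * (1 - G g (t - \<tau>)) = measure_pmf.prob ?M (B (\<tau>, s))"
      unfolding B_def using Ev_z[OF v \<tau>T, of s "t - \<tau>"] lam_xx[OF \<tau>T s, of v] by simp
  qed
  also have "\<dots> = (\<Sum>x\<in>{1..t} \<times> {1..S}. measure_pmf.prob ?M (B x))"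
    by (simp add: sum.cartesian_product)
  also have "\<dots> = measure_pmf.prob ?M (\<Union>x\<in>{1..t} \<times> {1..S}. B x)"
    using measure_pmf.finite_measure_finite_Union[of "{1..t} \<times> {1..S}" B ?M] disj by simp
  also have "\<dots> \<le> 1" by simp
  finally show ?thesis .
qed

lemma feasible: "xx \<in> LP_feasible V S T lam g"
proof -
  have h1: "\<forall>v\<in>{1..V}. \<forall>s\<in>{1..S}. \<forall>t\<in>{1..T}. 0 \<le> xx v s t \<and> xx v s t \<le> 1"
  proof (intro ballI)
    fix v s t assume "v \<in> {1..V}" "s \<in> {1..S}" "t \<in> {1..T}"
    then show "0 \<le> xx v s t \<and> xx v s t \<le> 1" using xx_bounds[of t s v] by blast
  qed
  have h2: "\<forall>v\<in>{1..V}. \<forall>t\<in>{1..T}.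
            (\<Sum>\<tau>\<in>{1..t}. \<Sum>s\<in>{1..S}. lam s \<tau> * xx v s \<tau> * (1 - G g (t - \<tau>))) \<le> 1"
  proof (intro ballI)
    fix v t assume "v \<in> {1..V}" "t \<in> {1..T}"
    then show "(\<Sum>\<tau>\<in>{1..t}. \<Sum>s\<in>{1..S}. lam s \<tau> * xx v s \<tau> * (1 - G g (t - \<tau>))) \<le> 1"
      by (rule constr)
  qed
  show ?thesis unfolding LP_feasible_def mem_Collect_eq using h1 h2 by (rule conjI)
qed

lemma exp_eq:
  "expected_completed V S T lam p g \<pi> =
   (\<Sum>t\<in>{1..T}. measure_pmf.prob (scenario_pmf V S T lam p g)
        {w. completed V \<pi> (fst w) (fst (snd w)) (snd (snd w)) t})"
proof -
  let ?M = "scenario_pmf V S T lam p g"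
  let ?E = "\<lambda>t. {w. completed V \<pi> (fst w) (fst (snd w)) (snd (snd w)) t}"
  have pt: "(\<lambda>(a, z, r). real (num_completed V T \<pi> a z r)) = (\<lambda>w. \<Sum>t\<in>{1..T}. indicator (?E t) w)"
  proof
    fix w :: "arrivals \<times> zs \<times> rs"
    obtain a z r where w: "w = (a, z, r)" by (cases w) auto
    have "(\<Sum>t\<in>{1..T}. if completed V \<pi> a z r t then 1 else (0::real)) =
          (\<Sum>t\<in>{t \<in> {1..T}. completed V \<pi> a z r t}. 1)"
      by (rule sum.inter_filter[symmetric]) simp
    then have cardeq: "real (card {t \<in> {1..T}. completed V \<pi> a z r t}) =
               (\<Sum>t\<in>{1..T}. if completed V \<pi> a z r t then 1 else (0::real))"
      by simp
    have e1: "(\<lambda>(a, z, r). real (num_completed V T \<pi> a z r)) w = real (card {t \<in> {1..T}. completed V \<pi> a z r t})"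
      unfolding w num_completed_def by simp
    have e2: "(\<Sum>t\<in>{1..T}. indicator (?E t) w) = (\<Sum>t\<in>{1..T}. if completed V \<pi> a z r t then 1 else (0::real))"
      by (rule sum.cong) (auto simp: w indicator_def)
    show "(\<lambda>(a, z, r). real (num_completed V T \<pi> a z r)) w = (\<Sum>t\<in>{1..T}. indicator (?E t) w)"
      by (simp only: e1 cardeq e2)
  qed
  have "measure_pmf.expectation ?M (\<lambda>w. \<Sum>t\<in>{1..T}. (indicator (?E t) w :: real)) =
        (\<Sum>t\<in>{1..T}. measure_pmf.expectation ?M (indicator (?E t) :: _ \<Rightarrow> real))"
    by (rule Bochner_Integration.integral_sum) (auto intro!: measure_pmf.integrable_const_bound[where B=1])
  then show ?thesis unfolding expected_completed_def pt by simp
qed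

lemma policy_bound: "expected_completed V S T lam p g \<pi> \<le> LP_obj V S T lam p xx"
  unfolding exp_eq LP_obj_def by (rule sum_mono) (rule compl_le)

end



theorem proposition1:
  fixes V S T :: nat and lam :: "nat \<Rightarrow> nat \<Rightarrow> real" and p :: "nat \<Rightarrow> nat \<Rightarrow> real"
    and g :: "nat pmf"
  assumes "\<forall>s\<in>{1..S}. \<forall>t\<in>{1..T}. 0 \<le> lam s t"
    and "\<forall>t\<in>{1..T}. (\<Sum>s\<in>{1..S}. lam s t) \<le> 1"
    and "\<forall>v\<in>{1..V}. \<forall>s\<in>{1..S}. 0 \<le> p v s \<and> p v s \<le> 1"
    and "0 \<notin> set_pmf g"
  shows "clairvoyant_value V S T lam p g \<le> LP_value V S T lam p g"
proof -
  have bdd: "bdd_above (LP_obj V S T lam p ` LP_feasible V S T lam g)"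
  proof (rule bdd_aboveI2)
    fix x assume "x \<in> LP_feasible V S T lam g"
    show "LP_obj V S T lam p x \<le> (\<Sum>t\<in>{1..T}. \<Sum>s\<in>{1..S}. lam s t)"
      unfolding LP_obj_def
    proof (intro sum_mono)
      fix t s assume t: "t \<in> {1..T}" and s: "s \<in> {1..S}"
      have "0 \<le> lam s t" using assms(1) t s by blast
      then show "lam s t * min (\<Sum>v\<in>{1..V}. x v s t * p v s) 1 \<le> lam s t"
        using mult_left_mono[of "min (\<Sum>v\<in>{1..V}. x v s t * p v s) 1" 1 "lam s t"] by simp
    qed
  qed
  have ne: "expected_completed V S T lam p g ` {\<pi>. nonanticipating \<pi>} \<noteq> {}"
  proof -
    have "nonanticipating (\<lambda>_ _ _ _. {})" unfolding nonanticipating_def by simp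
    then show ?thesis by blast
  qed
  show ?thesis unfolding clairvoyant_value_def
  proof (rule cSup_least[OF ne])
    fix y assume "y \<in> expected_completed V S T lam p g ` {\<pi>. nonanticipating \<pi>}"
    then obtain \<pi> where na: "nonanticipating \<pi>" and y: "y = expected_completed V S T lam p g \<pi>" by blast
    have "y \<le> LP_obj V S T lam p (xx V S T lam p g \<pi>)"
      using policy_bound[OF assms na] y by simp
    also have "\<dots> \<le> LP_value V S T lam p g"
      unfolding LP_value_def
      by (rule cSup_upper[OF imageI[OF feasible[OF assms na]] bdd])
    finally show "y \<le> LP_value V S T lam p g" .
  qed
qed


end
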